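(* Let $a>0$ and $n,k$ be integers with $1\le k\le n/2$, and let $a_0,\dots,a_n$ be integers. Say a prime $p$ satisfies (C) if $p\mid\prod_{i=1}^k(a+n-k+i)$ and $p\nmid a_0a_n$. (i) If there is a prime $p>a+k$ satisfying (C), then $f_{n,a}(x)$ has no factor of degree $k$ in $\mathbb{Q}[x]$. (ii) Let $p\ge k+2$ be a prime satisfying (C). Put $r_p=\lfloor k/2\rfloor$ if $p<2k$ and $r_p=p-1$ if $p\ge 2k$, and $\mathcal{A}_p=\bigcup_{i=1}^{r_p}\big([ip-k,\,ip-1]\cap\mathbb{Z}_{>0}\big)\cup\{j\in\mathbb{Z}: j>pr_p\}$. If $a\notin\mathcal{A}_p$, then $f_{n,a}(x)$ has no factor of degree $k$ in $\mathbb{Q}[x]$. (iii) Let $P_1>P_2>\cdots>P_s\ge k+2$ be primes satisfying (C), and let $\{Q_1,\dots,Q_g\}\subseteq\{P_1,\dots,P_s\}$. Put $\mathcal{B}\{Q_1,\dots,Q_g\}=\bigcap_{l=1}^{g}\mathcal{A}_{Q_l}$ with $\mathcal{A}_{Q_l}$ as in (ii). If $a\notin\mathcal{B}\{Q_1,\dots,Q_g\}$, then $f_{n,a}(x)$ has no factor of degree $k$ in $\mathbb{Q}[x]$.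
   Context: Here $a$ is an integer. For integers $n\ge 1$, $a\ge 0$ and integers $a_0,\dots,a_n$, $f_{n,a}(x)=\sum_{j=0}^{n} a_j\frac{x^j}{(j+a)!}$. *)

theory Defs
  imports "HOL-Computational_Algebra.Polynomial"
begin

definition f_poly :: "nat \<Rightarrow> nat \<Rightarrow> (nat \<Rightarrow> int) \<Rightarrow> rat poly" where
  "f_poly n a c = (\<Sum>j\<le>n. monom (of_int (c j) / fact (j + a)) j)"

definition cond_C :: "nat \<Rightarrow> nat \<Rightarrow> nat \<Rightarrow> (nat \<Rightarrow> int) \<Rightarrow> nat \<Rightarrow> bool" where
  "cond_C n k a c p \<longleftrightarrow> prime p \<and> p dvd (\<Prod>i=1..k. a + n - k + i) \<and> \<not> int p dvd (c 0 * c n)"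

definition r_p :: "nat \<Rightarrow> nat \<Rightarrow> nat" where
  "r_p k p = (if p < 2 * k then k div 2 else p - 1)"

definition A_p :: "nat \<Rightarrow> nat \<Rightarrow> int set" where
  "A_p k p = (\<Union>i\<in>{1..r_p k p}. {int (i * p) - int k .. int (i * p) - 1} \<inter> {0<..})
             \<union> {j. j > int (p * r_p k p)}"

definition has_factor_of_degree :: "rat poly \<Rightarrow> nat \<Rightarrow> bool" where
  "has_factor_of_degree f k \<longleftrightarrow> (\<exists>g. degree g = k \<and> g dvd f)"

end

theory Submission
  imports Defs "Berlekamp_Zassenhaus.Factor_Bound"
begin



lemma prodE_rec:
  fixes p q rho :: nat
  assumes p: "prime p" and rho: "rho < p"
  shows "multiplicity p (\<Prod>i=1..j. q*p+rho+i) = (j+rho) div p + multiplicity p (\<Prod>i=1..(j+rho) div p. q + i)"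
proof (induction j)
  case 0
  have "rho div p = 0" using rho by simp
  then show ?case by simp
next
  case (Suc j)
  have p1: "p > 1" using p prime_gt_1_nat by blast
  have pe: "prime_elem p" using p by simp
  have nz1: "(\<Prod>i=1..j. q*p+rho+i) \<noteq> 0" by (simp add: prod_zero_iff)
  have split: "(\<Prod>i=1..Suc j. q*p+rho+i) = (\<Prod>i=1..j. q*p+rho+i) * (q*p+rho+Suc j)"
    by (simp add: prod.nat_ivl_Suc')
  have m: "multiplicity p (\<Prod>i=1..Suc j. q*p+rho+i) = multiplicity p (\<Prod>i=1..j. q*p+rho+i) + multiplicity p (q*p+rho+Suc j)"
    unfolding split by (rule prime_elem_multiplicity_mult_distrib[OF pe nz1]) simp
  show ?case
  proof (cases "(Suc j + rho) mod p = 0")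
    case True
    have d: "(Suc j + rho) div p = Suc ((j+rho) div p)"
      using div_Suc[of "j+rho" p] True by simp
    have eq: "q*p+rho+Suc j = p * (q + Suc ((j+rho) div p))"
    proof -
      have "Suc j + rho = p * ((Suc j + rho) div p)" using True mult_div_mod_eq[of p "Suc j + rho"] by simp
      then show ?thesis using d by (simp add: algebra_simps)
    qed
    have "multiplicity p (q*p+rho+Suc j) = Suc (multiplicity p (q + Suc ((j+rho) div p)))"
      unfolding eq by (rule multiplicity_times_same) (use p1 in auto)
    moreover have "(\<Prod>i=1..Suc ((j+rho) div p). q + i) = (\<Prod>i=1..(j+rho) div p. q + i) * (q + Suc ((j+rho) div p))"
      by (simp add: prod.nat_ivl_Suc')
    moreover have "multiplicity p ((\<Prod>i=1..(j+rho) div p. q + i) * (q + Suc ((j+rho) div p)))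
        = multiplicity p (\<Prod>i=1..(j+rho) div p. q + i) + multiplicity p (q + Suc ((j+rho) div p))"
      by (rule prime_elem_multiplicity_mult_distrib[OF pe]) (simp_all add: prod_zero_iff)
    ultimately show ?thesis using m Suc.IH d by simp
  next
    case False
    have d: "(Suc j + rho) div p = (j+rho) div p"
      using div_Suc[of "j+rho" p] False by simp
    have "\<not> p dvd (q*p+rho+Suc j)"
    proof
      assume "p dvd q*p+rho+Suc j"
      then have "p dvd Suc j + rho" by (metis add.assoc add.commute dvd_add_right_iff dvd_triv_right)
      then show False using False by (simp add: dvd_eq_mod_eq_0)
    qed
    then have "multiplicity p (q*p+rho+Suc j) = 0" by (rule not_dvd_imp_multiplicity_0)
    then show ?thesis using m Suc.IH d by simp
  qed
qed

lemma fact_mult_bound: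
  assumes p: "prime p" and "m \<ge> 1"
  shows "(p - 1) * multiplicity p (\<Prod>i=1..m. i) \<le> m - 1"
  using assms(2)
proof (induction m rule: less_induct)
  case (less m)
  have p1: "p > 1" using p prime_gt_1_nat by blast
  have r: "multiplicity p (\<Prod>i=1..m. 0*p+0+i) = m div p + multiplicity p (\<Prod>i=1..m div p. 0 + i)"
  proof -
    have z: "((+) (0::nat)) = (\<lambda>i. i)" by auto
    show ?thesis using prodE_rec[OF p, where q=0 and rho=0 and j=m] p1 by (simp add: z)
  qed
  define M where "M = m div p"
  have r': "multiplicity p (\<Prod>i=1..m. i) = M + multiplicity p (\<Prod>i=1..M. i)"
    using r M_def by simp
  show ?case
  proof (cases "M = 0")
    case True
    then show ?thesis using r' by simp
  next
    case False
    have pM: "p * M \<le> m" unfolding M_def by simp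
    have lt: "M < m" unfolding M_def using p1 less.prems by (simp add: div_less_dividend)
    have IH: "(p - 1) * multiplicity p (\<Prod>i=1..M. i) \<le> M - 1" using less.IH[OF lt] False by simp
    have "(p - 1) * multiplicity p (\<Prod>i=1..m. i) = (p-1)*M + (p - 1) * multiplicity p (\<Prod>i=1..M. i)"
      using r' by (simp add: algebra_simps)
    also have "\<dots> \<le> (p-1)*M + (M - 1)" using IH by simp
    also have "\<dots> = p*M - 1" using False p1 by (cases p) (auto simp: algebra_simps)
    also have "\<dots> \<le> m - 1" using pM by simp
    finally show ?thesis .
  qed
qed



lemma ineqA:
  fixes k p M q r rho :: int
  assumes k: "k \<ge> 1" and p: "p \<ge> k+2" and Mq: "M + q \<ge> p" and q0: "q \<ge> 0" and rho0: "rho \<ge> 0"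
  and C: "(q < r \<and> rho + k + 1 \<le> p) \<or> (q = r \<and> rho = 0)"
  and R: "(p < 2*k \<and> 2*r \<le> k) \<or> (2*k < p \<and> r = p - 1)"
  shows "k*(M+q-1) < (p-1)*(M*(p-k) - rho)"
proof -
  from C show ?thesis
  proof
    assume c: "q < r \<and> rho + k + 1 \<le> p"
    define t where "t = M - (p - q)"
    have t0: "t \<ge> 0" using Mq t_def by simp
    have key: "(p-q-1)*(p-k) \<ge> k"
      using R
    proof
      assume "p < 2*k \<and> 2*r \<le> k"
      then have "2*(p-q-1) \<ge> 2*p - k" using c by (elim conjE) arith
      moreover have "(p-q-1)*(p-k) \<ge> (p-q-1)*2" using p c \<open>p < 2*k \<and> 2*r \<le> k\<close>
        by (intro mult_left_mono) linarith+
      ultimately show ?thesis using p by linarith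
    next
      assume "2*k < p \<and> r = p - 1"
      then have "p - q - 1 \<ge> 1" "p - k \<ge> k" using c by linarith+
      then have "(p-q-1)*(p-k) \<ge> 1*k" by (intro mult_mono) (use k in linarith)+
      then show ?thesis by simp
    qed
    have "(p-q)*(p-k) - rho \<ge> (p-q-1)*(p-k) + 1" using c by (simp add: algebra_simps)
    then have k1: "k < (p-q)*(p-k) - rho" using key by linarith
    have k2: "k*t \<le> (p-1)*(p-k)*t"
    proof -
      have "k \<le> (p-1)*(p-k)"
      proof -
        have "(p-1)*(p-k) \<ge> k*1" using p k by (intro mult_mono) linarith+
        then show ?thesis by simp
      qed
      then show ?thesis using t0 by (intro mult_right_mono) auto
    qed
    have "k*(M+q-1) = k*(p-1) + k*t" unfolding t_def by (simp add: algebra_simps)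
    also have "\<dots> < (p-1)*((p-q)*(p-k) - rho) + (p-1)*(p-k)*t"
    proof -
      have "(p-1)*k < (p-1)*((p-q)*(p-k) - rho)" using k1 p k by (intro mult_strict_left_mono) auto
      moreover have "k*(p-1) = (p-1)*k" by simp
      ultimately show ?thesis using k2 by linarith
    qed
    also have "\<dots> = (p-1)*(M*(p-k) - rho)" unfolding t_def by (simp add: algebra_simps)
    finally show ?thesis .
  next
    assume c: "q = r \<and> rho = 0"
    from R show ?thesis
    proof
      assume r: "p < 2*k \<and> 2*r \<le> k"
      have Mr: "M \<ge> r" "M \<ge> 1" using Mq c r p by linarith+
      have "k*(M+q-1) < k*M + k*M"
      proof -
        have "k*r \<le> k*M" using Mr k by (intro mult_left_mono) auto
        moreover have "k*(M+q-1) = k*M + k*r - k" using c by (simp add: algebra_simps)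
        ultimately show ?thesis using k by linarith
      qed
      also have "k*M + k*M = 2*k*M" by simp
      also have "\<dots> \<le> (p-1)*M*(p-k)"
      proof -
        have "2*k \<le> (p-1)*(p-k)"
        proof -
          have "(p-1)*(p-k) \<ge> k*2" using p k by (intro mult_mono) linarith+
          then show ?thesis by simp
        qed
        then show ?thesis using Mr by (metis mult.assoc mult.commute mult_right_mono zero_le_one order_trans)
      qed
      finally show ?thesis using c by (simp add: algebra_simps)
    next
      assume r: "2*k < p \<and> r = p - 1"
      have M1: "M \<ge> 1" using Mq c r by linarith
      have a1: "k*(p-2)*M \<ge> k*(p-2)" using M1 p k by simp
      have a2: "(p-1)*(p-k) \<ge> (p-1)*(k+1)" using r p k by (intro mult_left_mono) linarith+
      have a3: "(p-1)*(p-k)*M \<ge> (p-1)*(k+1)*M" using a2 M1 by (intro mult_right_mono) auto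
      have a4: "(p-1)*M > 0" using M1 p k by (intro mult_pos_pos) linarith+
      have qp: "q = p - 1" using c r by simp
      have "k*(M+q-1) = k*M + k*(p-2)" unfolding qp by (simp add: algebra_simps)
      also have "\<dots> < (p-1)*(k+1)*M" using a1 a4 by (simp add: algebra_simps)
      also have "\<dots> \<le> (p-1)*(M*(p-k) - rho)" using a3 c by (simp add: algebra_simps)
      finally show ?thesis .
    qed
  qed
qed


lemma combine:
  fixes k p M q r rho M' E j :: int
  assumes k: "k \<ge> 1" and p: "p \<ge> k+2" and q0: "q \<ge> 0" and rho0: "rho \<ge> 0" and M1: "M \<ge> 1"
  and C: "(q < r \<and> rho + k + 1 \<le> p) \<or> (q = r \<and> rho = 0)"
  and R: "(p < 2*k \<and> 2*r \<le> k) \<or> (2*k < p \<and> r = p - 1)"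
  and Mj: "M*p \<le> j + rho"
  and M'0: "M' \<ge> 0" and E0: "E \<ge> 0"
  and M'case: "(M' = 0 \<and> E = 0) \<or> (M' \<ge> 1 \<and> p*M' \<le> M + q \<and> (p-1)*E \<le> M' - 1)"
  shows "k*(M+M'+E) < j"
proof -
  have rk: "rho + k + 1 \<le> p" using C p by auto
  from M'case show ?thesis
  proof
    assume h: "M' = 0 \<and> E = 0"
    have 1: "M*(p-k) \<ge> p-k" using mult_right_mono[of 1 M "p-k"] M1 p by simp
    have 2: "M*(p-k) = M*p - k*M" by (simp add: right_diff_distrib mult.commute)
    have 3: "k*(M+M'+E) = k*M" using h by simp
    show ?thesis using 1 2 3 rk Mj by linarith
  next
    assume h: "M' \<ge> 1 \<and> p*M' \<le> M + q \<and> (p-1)*E \<le> M' - 1"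
    have A: "k*(M+q-1) < (p-1)*(M*(p-k) - rho)"
    proof (rule ineqA[OF k p _ q0 rho0 C R])
      have "p*1 \<le> p*M'" using h p k by (intro mult_left_mono) auto
      then show "M + q \<ge> p" using h by linarith
    qed
    have e1: "(p-1)*(k*(M'+E)) = k*((p-1)*M' + (p-1)*E)" by (simp add: algebra_simps)
    have e2: "k*((p-1)*M' + (p-1)*E) \<le> k*((p-1)*M' + (M'-1))" using h k by (intro mult_left_mono) auto
    have e3: "k*((p-1)*M' + (M'-1)) = k*(p*M' - 1)" by (simp add: algebra_simps)
    have e4: "k*(p*M' - 1) \<le> k*(M+q-1)" using h k by (intro mult_left_mono) auto
    have lt: "(p-1)*(k*(M'+E)) < (p-1)*(M*(p-k) - rho)" using e1 e2 e3 e4 A by linarith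
    have lt2: "k*(M'+E) < M*(p-k) - rho"
    proof (rule ccontr)
      assume "\<not> ?thesis"
      then have "M*(p-k) - rho \<le> k*(M'+E)" by simp
      then have "(p-1)*(M*(p-k) - rho) \<le> (p-1)*(k*(M'+E))" using p k by (intro mult_left_mono) auto
      then show False using lt by simp
    qed
    have 2: "M*(p-k) = M*p - k*M" by (simp add: right_diff_distrib mult.commute)
    have 3: "k*(M+M'+E) = k*M + k*(M'+E)" by (simp add: distrib_left)
    show ?thesis using lt2 2 3 Mj by linarith
  qed
qed

lemma r_p_cases: "(p < 2*k \<and> r_p k p = k div 2) \<or> (2*k \<le> p \<and> r_p k p = p - 1)"
  unfolding r_p_def by auto

lemma NT_main:
  fixes p k a j :: nat
  assumes p: "prime p" and k: "k \<ge> 1" and pk: "p \<ge> k+2" and a: "a > 0"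
    and nA: "int a \<notin> A_p k p" and j: "j \<ge> 1"
  shows "k * multiplicity p (\<Prod>i=1..j. a+i) < j"
proof -
  define q where "q = a div p"
  define rho where "rho = a mod p"
  define r where "r = r_p k p"
  have p1: "p > 1" using p prime_gt_1_nat by blast
  have arep: "a = q*p + rho" unfolding q_def rho_def by simp
  have rhop: "rho < p" unfolding rho_def using p1 by simp
  have R: "(p < 2*k \<and> r = k div 2) \<or> (2*k \<le> p \<and> r = p - 1)" unfolding r_def by (rule r_p_cases)
  have p2k: "p \<noteq> 2*k"
  proof
    assume h: "p = 2*k"
    then have "2 dvd p" by simp
    then have "2 = p" using primes_dvd_imp_eq[OF two_is_prime_nat p] by simp
    then show False using h pk by simp
  qed
  have rle: "r \<le> p - 1" using R pk by auto
  have apr: "a \<le> p * r"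
  proof (rule ccontr)
    assume "\<not> a \<le> p*r"
    then have "int a \<in> {j. j > int (p * r_p k p)}" unfolding r_def by (simp flip: of_nat_mult)
    then show False using nA unfolding A_p_def by blast
  qed
  have C: "(q < r \<and> rho + k + 1 \<le> p) \<or> (q = r \<and> rho = 0)"
  proof (cases "q < r")
    case False
    then have "q*p \<ge> r*p" by simp
    moreover have "q \<le> r"
    proof (rule ccontr)
      assume "\<not> q \<le> r"
      then have "q \<ge> r+1" by simp
      then have "q*p \<ge> (r+1)*p" by (intro mult_right_mono) auto
      then show False using apr arep p1 by (simp add: algebra_simps)
    qed
    ultimately show ?thesis using False apr arep by (simp add: algebra_simps)
  next
    case True
    show ?thesis
    proof (rule ccontr)
      assume "\<not> ?thesis"
      then have big: "rho + k + 1 > p" using True by auto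
      define i where "i = q + 1"
      have i: "i \<in> {1..r_p k p}" using True unfolding i_def r_def by auto
      have "int a \<in> {int (i * p) - int k .. int (i * p) - 1} \<inter> {0<..}"
        using big rhop a p1 unfolding i_def arep by (auto simp: algebra_simps intro: add_pos_nonneg add_nonneg_pos)
      then show False using nA i unfolding A_p_def by blast
    qed
  qed
  define M where "M = (j + rho) div p"
  have E1: "multiplicity p (\<Prod>i=1..j. a+i) = M + multiplicity p (\<Prod>i=1..M. q + i)"
    unfolding M_def arep by (rule prodE_rec[OF p rhop])
  show ?thesis
  proof (cases "M = 0")
    case True
    then show ?thesis using E1 j by simp
  next
    case False
    have qp: "q < p" using C rle p1 by auto
    define M' where "M' = (M + q) div p"
    have E2: "multiplicity p (\<Prod>i=1..M. q + i) = M' + multiplicity p (\<Prod>i=1..M'. i)"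
    proof -
      have z: "((+) (0::nat)) = (\<lambda>i. i)" by auto
      show ?thesis using prodE_rec[OF p qp, where q=0 and j=M] unfolding M'_def by (simp add: z)
    qed
    define E where "E = multiplicity p (\<Prod>i=1..M'. i)"
    have Mcase: "(M' = 0 \<and> E = 0) \<or> (M' \<ge> 1 \<and> p*M' \<le> M + q \<and> (p-1)*E \<le> M' - 1)"
    proof (cases "M' = 0")
      case True then show ?thesis unfolding E_def by simp
    next
      case False
      have "p*M' \<le> M + q" unfolding M'_def by simp
      moreover have "(p-1)*E \<le> M' - 1" unfolding E_def by (rule fact_mult_bound[OF p]) (use False in simp)
      ultimately show ?thesis using False by simp
    qed
    have Mj: "M*p \<le> j + rho" unfolding M_def by simp
    have Rint: "(int p < 2*int k \<and> 2*int r \<le> int k) \<or> (2*int k < int p \<and> int r = int p - 1)"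
      using R p1 p2k by auto
    have Cint: "(int q < int r \<and> int rho + int k + 1 \<le> int p) \<or> (int q = int r \<and> int rho = 0)"
      using C by auto
    have Mcint: "(int M' = 0 \<and> int E = 0) \<or> (int M' \<ge> 1 \<and> int p* int M' \<le> int M + int q \<and> (int p-1)* int E \<le> int M' - 1)"
    proof (cases "M' = 0")
      case True then show ?thesis using Mcase by simp
    next
      case False
      then have h: "M' \<ge> 1 \<and> p*M' \<le> M + q \<and> (p-1)*E \<le> M' - 1" using Mcase by simp
      then have "int ((p-1)*E) \<le> int (M' - 1)" by linarith
      also have "int (M' - 1) = int M' - 1" using h by simp
      also have "int ((p-1)*E) = (int p - 1) * int E" using p1 by (simp add: of_nat_diff)
      finally have "(int p - 1) * int E \<le> int M' - 1" .
      moreover have "int p * int M' \<le> int M + int q" using h by (simp flip: of_nat_mult of_nat_add)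
      ultimately show ?thesis using h by simp
    qed
    have Mjint: "int M * int p \<le> int j + int rho" using Mj by (simp flip: of_nat_mult)
    have "int k*(int M+int M'+int E) < int j"
      by (rule combine[OF _ _ _ _ _ Cint Rint Mjint _ _ Mcint]) (use k pk False in auto)
    then have "k*(M+M'+E) < j" by (simp flip: of_nat_mult of_nat_add)
    then show ?thesis using E1 E2 E_def by (simp add: add.assoc)
  qed
qed



lemma sum_single_nondvd:
  fixes f :: "'b \<Rightarrow> 'a::comm_ring_1"
  assumes "finite A" "x \<in> A" "\<not> d dvd f x" "\<And>y. y \<in> A \<Longrightarrow> y \<noteq> x \<Longrightarrow> d dvd f y"
  shows "\<not> d dvd sum f A"
proof
  assume h: "d dvd sum f A"
  have "sum f A = f x + sum f (A - {x})" using assms(1,2) by (simp add: sum.remove)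
  moreover have "d dvd sum f (A - {x})" using assms(4) by (intro dvd_sum) auto
  ultimately show False using h assms(3) by (simp add: dvd_add_left_iff)
qed

lemma step2:
  fixes G H :: "int poly" and P :: int
  assumes P: "prime P" and g0: "\<not> P dvd Polynomial.coeff G 0" and hd: "\<not> P dvd Polynomial.coeff H (degree H)"
  shows "\<exists>j \<le> degree H. \<not> P dvd Polynomial.coeff (G*H) j"
proof -
  define js where "js = (LEAST j. \<not> P dvd Polynomial.coeff H j)"
  have js1: "\<not> P dvd Polynomial.coeff H js" unfolding js_def by (rule LeastI[of _ "degree H"]) (rule hd)
  have js2: "js \<le> degree H" unfolding js_def by (rule Least_le) (rule hd)
  have js3: "P dvd Polynomial.coeff H i" if "i < js" for i using not_less_Least[OF that[unfolded js_def]] by simp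
  have "\<not> P dvd (\<Sum>i\<le>js. Polynomial.coeff G i * Polynomial.coeff H (js - i))"
  proof (rule sum_single_nondvd[where x=0])
    show "\<not> P dvd Polynomial.coeff G 0 * Polynomial.coeff H (js - 0)" using P g0 js1 by (simp add: prime_dvd_mult_iff)
  next
    fix y assume "y \<in> {..js}" "y \<noteq> 0"
    then have "js - y < js" by auto
    then show "P dvd Polynomial.coeff G y * Polynomial.coeff H (js - y)" using js3 by simp
  qed auto
  then show ?thesis using js2 by (auto simp: Polynomial.coeff_mult)
qed


lemma step1:
  fixes G H :: "int poly" and P :: int and k :: nat
  assumes P: "prime P" and dG: "degree G = k" and k: "k \<ge> 1"
    and gk: "\<not> P dvd Polynomial.coeff G k" and g0d: "P dvd Polynomial.coeff G 0"
    and g0: "Polynomial.coeff G 0 \<noteq> 0" and h0: "Polynomial.coeff H 0 \<noteq> 0"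
    and slope: "\<And>j. 1 \<le> j \<Longrightarrow> Polynomial.coeff (G*H) j \<noteq> 0 \<Longrightarrow>
       int k * (int (multiplicity P (Polynomial.coeff (G*H) 0)) - int (multiplicity P (Polynomial.coeff (G*H) j))) < int j"
  shows False
proof -
  let ?v = "multiplicity P"
  have pe: "prime_elem P" using P by (rule prime_imp_prime_elem)
  have nu: "\<not> is_unit P" using pe by (simp add: prime_elem_not_unit)
  define t where "t = ?v (Polynomial.coeff G 0)"
  define s where "s = ?v (Polynomial.coeff H 0)"
  have t1: "t \<ge> 1"
  proof -
    have "t \<noteq> 0" unfolding t_def using multiplicity_eq_zero_iff[OF g0 nu] g0d by simp
    then show ?thesis by simp
  qed
  have V: "?v (Polynomial.coeff (G*H) 0) = t + s" unfolding t_def s_def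
    by (simp add: Polynomial.coeff_mult_0 prime_elem_multiplicity_mult_distrib[OF pe g0 h0])
  have gkz: "Polynomial.coeff G k \<noteq> 0" using gk by auto
  have vgk: "?v (Polynomial.coeff G k) = 0" using gk by (rule not_dvd_imp_multiplicity_0)
  define IG where "IG = {i\<in>{1..k}. Polynomial.coeff G i \<noteq> 0}"
  define IH where "IH = {j\<in>{1..degree H}. Polynomial.coeff H j \<noteq> 0}"
  define SG where "SG = (\<lambda>i. (of_nat t - of_nat (?v (Polynomial.coeff G i))) / of_nat i :: rat) ` IG"
  define SH where "SH = (\<lambda>j. (of_nat s - of_nat (?v (Polynomial.coeff H j))) / of_nat j :: rat) ` IH"
  define \<sigma> where "\<sigma> = Max (SG \<union> SH)"
  have fin: "finite (SG \<union> SH)" unfolding SG_def SH_def IG_def IH_def by auto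
  have kIG: "k \<in> IG" unfolding IG_def using k gkz by auto
  have ne: "SG \<union> SH \<noteq> {}" unfolding SG_def using kIG by auto
  have sig_ge: "x \<le> \<sigma>" if "x \<in> SG \<union> SH" for x unfolding \<sigma>_def using fin that by simp
  have sig_in: "\<sigma> \<in> SG \<union> SH" unfolding \<sigma>_def using fin ne by (rule Max_in)
  have mem: "(of_nat t - of_nat (?v (Polynomial.coeff G k))) / of_nat k \<in> SG \<union> SH"
    unfolding SG_def using kIG by blast
  have a: "of_nat t / of_nat k \<le> \<sigma>" using sig_ge[OF mem] vgk by simp
  have bG: "of_nat t \<le> of_nat (?v (Polynomial.coeff G i)) + \<sigma> * of_nat i" if "Polynomial.coeff G i \<noteq> 0" for i
  proof (cases "i = 0")
    case True then show ?thesis unfolding t_def by simp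
  next
    case False
    have "i \<le> k" using that dG Polynomial.le_degree by blast
    then have "i \<in> IG" unfolding IG_def using False that by auto
    then have "(of_nat t - of_nat (?v (Polynomial.coeff G i))) / of_nat i \<le> \<sigma>" using sig_ge unfolding SG_def by auto
    then have "of_nat t - of_nat (?v (Polynomial.coeff G i)) \<le> \<sigma> * of_nat i" using False by (simp add: divide_le_eq)
    then show ?thesis by simp
  qed
  have bH: "of_nat s \<le> of_nat (?v (Polynomial.coeff H j)) + \<sigma> * of_nat j" if "Polynomial.coeff H j \<noteq> 0" for j
  proof (cases "j = 0")
    case True then show ?thesis unfolding s_def by simp
  next
    case False
    have "j \<le> degree H" using that Polynomial.le_degree by blast
    then have "j \<in> IH" unfolding IH_def using False that by auto
    then have "(of_nat s - of_nat (?v (Polynomial.coeff H j))) / of_nat j \<le> \<sigma>" using sig_ge unfolding SH_def by auto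
    then have "of_nat s - of_nat (?v (Polynomial.coeff H j)) \<le> \<sigma> * of_nat j" using False by (simp add: divide_le_eq)
    then show ?thesis by simp
  qed
  define I0 where "I0 = {i. i \<le> k \<and> Polynomial.coeff G i \<noteq> 0 \<and> of_nat (?v (Polynomial.coeff G i)) + \<sigma> * of_nat i = of_nat t}"
  define J0 where "J0 = {j. j \<le> degree H \<and> Polynomial.coeff H j \<noteq> 0 \<and> of_nat (?v (Polynomial.coeff H j)) + \<sigma> * of_nat j = of_nat s}"
  have finI: "finite I0" unfolding I0_def by simp
  have finJ: "finite J0" unfolding J0_def by simp
  have z0: "0 \<in> I0" unfolding I0_def t_def using g0 by simp
  have z1: "0 \<in> J0" unfolding J0_def s_def using h0 by simp
  define i0 where "i0 = Max I0"
  define j0 where "j0 = Max J0"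
  have i0I: "i0 \<in> I0" unfolding i0_def using finI z0 by (intro Max_in) auto
  have j0J: "j0 \<in> J0" unfolding j0_def using finJ z1 by (intro Max_in) auto
  have i0max: "i \<le> i0" if "i \<in> I0" for i unfolding i0_def using finI that by simp
  have j0max: "j \<le> j0" if "j \<in> J0" for j unfolding j0_def using finJ that by simp
  have m1: "i0 + j0 \<ge> 1"
  proof -
    from sig_in show ?thesis
    proof
      assume "\<sigma> \<in> SG"
      then obtain i where i: "i \<in> IG" and si: "\<sigma> = (of_nat t - of_nat (?v (Polynomial.coeff G i))) / of_nat i" unfolding SG_def by auto
      have "i \<ge> 1" "i \<le> k" "Polynomial.coeff G i \<noteq> 0" using i unfolding IG_def by auto
      moreover have "of_nat (?v (Polynomial.coeff G i)) + \<sigma> * of_nat i = of_nat t" using si \<open>i \<ge> 1\<close> by simp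
      ultimately have "i \<in> I0" unfolding I0_def by auto
      then show ?thesis using i0max \<open>i \<ge> 1\<close> by fastforce
    next
      assume "\<sigma> \<in> SH"
      then obtain j where j: "j \<in> IH" and sj: "\<sigma> = (of_nat s - of_nat (?v (Polynomial.coeff H j))) / of_nat j" unfolding SH_def by auto
      have "j \<ge> 1" "j \<le> degree H" "Polynomial.coeff H j \<noteq> 0" using j unfolding IH_def by auto
      moreover have "of_nat (?v (Polynomial.coeff H j)) + \<sigma> * of_nat j = of_nat s" using sj \<open>j \<ge> 1\<close> by simp
      ultimately have "j \<in> J0" unfolding J0_def by auto
      then show ?thesis using j0max \<open>j \<ge> 1\<close> by fastforce
    qed
  qed
  define m where "m = i0 + j0"
  define N where "N = ?v (Polynomial.coeff G i0) + ?v (Polynomial.coeff H j0)"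
  have gi0: "Polynomial.coeff G i0 \<noteq> 0" and ei0: "of_nat (?v (Polynomial.coeff G i0)) + \<sigma> * of_nat i0 = of_nat t"
    using i0I unfolding I0_def by auto
  have hj0: "Polynomial.coeff H j0 \<noteq> 0" and ej0: "of_nat (?v (Polynomial.coeff H j0)) + \<sigma> * of_nat j0 = of_nat s"
    using j0J unfolding J0_def by auto
  have tsN: "of_nat t + of_nat s = (of_nat N :: rat) + \<sigma> * of_nat m"
    unfolding N_def m_def using ei0 ej0 by (simp add: algebra_simps)
  have big: "P ^ (N+1) dvd Polynomial.coeff G y * Polynomial.coeff H (m - y)" if y: "y \<le> m" "y \<noteq> i0" for y
  proof (cases "Polynomial.coeff G y = 0 \<or> Polynomial.coeff H (m - y) = 0")
    case True then show ?thesis by auto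
  next
    case False
    then have gy: "Polynomial.coeff G y \<noteq> 0" and hy: "Polynomial.coeff H (m-y) \<noteq> 0" by auto
    have gt: "of_nat (?v (Polynomial.coeff G y)) + of_nat (?v (Polynomial.coeff H (m-y))) + \<sigma> * of_nat m > of_nat t + (of_nat s :: rat)"
    proof (cases "y > i0")
      case True
      have "y \<notin> I0" using i0max True by fastforce
      moreover have "y \<le> k" using gy dG Polynomial.le_degree by blast
      ultimately have "of_nat (?v (Polynomial.coeff G y)) + \<sigma> * of_nat y \<noteq> of_nat t" using gy unfolding I0_def by auto
      then have 1: "of_nat (?v (Polynomial.coeff G y)) + \<sigma> * of_nat y > of_nat t" using bG[OF gy] by simp
      have 2: "of_nat s \<le> of_nat (?v (Polynomial.coeff H (m-y))) + \<sigma> * of_nat (m-y)" using bH[OF hy] .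
      have "(of_nat m :: rat) = of_nat y + of_nat (m - y)" using y by (metis le_add_diff_inverse of_nat_add)
      then have "\<sigma> * of_nat m = \<sigma> * of_nat y + \<sigma> * of_nat (m - y)" by (simp only: distrib_left)
      then show ?thesis using 1 2 by linarith
    next
      case False
      then have yl: "y < i0" using y by simp
      have "m - y > j0" using yl unfolding m_def by simp
      then have "m - y \<notin> J0" using j0max by fastforce
      moreover have "m - y \<le> degree H" using hy Polynomial.le_degree by blast
      ultimately have "of_nat (?v (Polynomial.coeff H (m-y))) + \<sigma> * of_nat (m-y) \<noteq> of_nat s" using hy unfolding J0_def by auto
      then have 1: "of_nat (?v (Polynomial.coeff H (m-y))) + \<sigma> * of_nat (m-y) > of_nat s" using bH[OF hy] by simp
      have 2: "of_nat t \<le> of_nat (?v (Polynomial.coeff G y)) + \<sigma> * of_nat y" using bG[OF gy] .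
      have "(of_nat m :: rat) = of_nat y + of_nat (m - y)" using y by (metis le_add_diff_inverse of_nat_add)
      then have "\<sigma> * of_nat m = \<sigma> * of_nat y + \<sigma> * of_nat (m - y)" by (simp only: distrib_left)
      then show ?thesis using 1 2 by linarith
    qed
    then have "(of_nat (?v (Polynomial.coeff G y) + ?v (Polynomial.coeff H (m-y))) :: rat) > of_nat N"
      using tsN by simp
    then have "N + 1 \<le> ?v (Polynomial.coeff G y * Polynomial.coeff H (m - y))"
      using prime_elem_multiplicity_mult_distrib[OF pe gy hy] by simp
    moreover have "P ^ (N+1) dvd Polynomial.coeff G y * Polynomial.coeff H (m - y) \<longleftrightarrow> N + 1 \<le> ?v (Polynomial.coeff G y * Polynomial.coeff H (m - y))"
      by (rule power_dvd_iff_le_multiplicity) (use gy hy nu in auto)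
    ultimately show ?thesis by blast
  qed
  have small: "\<not> P ^ (N+1) dvd Polynomial.coeff G i0 * Polynomial.coeff H (m - i0)"
  proof -
    have "m - i0 = j0" unfolding m_def by simp
    moreover have "?v (Polynomial.coeff G i0 * Polynomial.coeff H j0) = N" unfolding N_def
      using prime_elem_multiplicity_mult_distrib[OF pe gi0 hj0] .
    ultimately show ?thesis using power_dvd_iff_le_multiplicity[of "Polynomial.coeff G i0 * Polynomial.coeff H j0" P N] gi0 hj0 nu
      by (metis Suc_eq_plus1 Suc_n_not_le_n mult_eq_0_iff power_dvd_iff_le_multiplicity)
  qed
  have nd: "\<not> P ^ (N+1) dvd Polynomial.coeff (G*H) m"
    unfolding Polynomial.coeff_mult
    by (rule sum_single_nondvd[where x=i0]) (use small big m_def in auto)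
  have Fm: "Polynomial.coeff (G*H) m \<noteq> 0" using nd by auto
  have vFm: "?v (Polynomial.coeff (G*H) m) \<le> N"
  proof (rule ccontr)
    assume "\<not> ?thesis"
    then have "N + 1 \<le> ?v (Polynomial.coeff (G*H) m)" by simp
    then show False using nd power_dvd_iff_le_multiplicity[OF Fm nu, of "N+1"] by blast
  qed
  have sl: "int k * (int (t + s) - int (?v (Polynomial.coeff (G*H) m))) < int m"
    using slope[OF _ Fm] m1 V unfolding m_def by simp
  have "int k * (int (t + s) - int N) \<le> int k * (int (t + s) - int (?v (Polynomial.coeff (G*H) m)))"
    using vFm by (intro mult_left_mono) auto
  with sl have sl2: "int k * (int (t + s) - int N) < int m" by simp
  have "of_int (int k * (int (t + s) - int N)) < (of_int (int m) :: rat)" using sl2 by linarith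
  then have "of_nat k * (of_nat t + of_nat s - of_nat N) < (of_nat m :: rat)" by simp
  moreover have X: "(of_nat t + of_nat s - of_nat N :: rat) = \<sigma> * of_nat m" using tsN by linarith
  ultimately have "of_nat k * (\<sigma> * of_nat m) < (of_nat m :: rat)" by simp
  then have lt: "(of_nat k * \<sigma>) * of_nat m < 1 * (of_nat m :: rat)" by (simp add: algebra_simps)
  have mpos: "(of_nat m :: rat) > 0" using m1 unfolding m_def by simp
  have "of_nat k * \<sigma> < 1" using lt mpos by (meson mult_less_cancel_right_pos)
  moreover have "of_nat k * \<sigma> \<ge> 1"
  proof -
    have "of_nat k * (of_nat t / of_nat k) \<le> of_nat k * \<sigma>" using a by (intro mult_left_mono) auto
    moreover have "of_nat k * (of_nat t / of_nat k) = (of_nat t :: rat)" using k by simp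
    moreover have "(of_nat t :: rat) \<ge> 1" using t1 by simp
    ultimately show ?thesis by linarith
  qed
  ultimately show False by simp
qed


lemma mult_int:
  fixes p x :: nat
  assumes p: "prime p" and x: "x \<noteq> 0"
  shows "multiplicity (int p) (int x) = multiplicity p x"
proof -
  have nu1: "\<not> is_unit (int p)" using p not_prime_unit prime_nat_int_transfer by blast
  have nu2: "\<not> is_unit p" using p not_prime_unit by blast
  have x': "int x \<noteq> 0" using x by simp
  have iff: "m \<le> multiplicity (int p) (int x) \<longleftrightarrow> m \<le> multiplicity p x" for m
  proof -
    have "int p ^ m dvd int x \<longleftrightarrow> p ^ m dvd x" by (simp only: semiring_1_class.of_nat_power[symmetric] int_dvd_int_iff)
    then show ?thesis
      using power_dvd_iff_le_multiplicity[OF x' nu1, of m] power_dvd_iff_le_multiplicity[OF x nu2, of m] by simp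
  qed
  show ?thesis using iff[of "multiplicity p x"] iff[of "multiplicity (int p) (int x)"] by simp
qed

lemma fact_prod:
  fixes a j n :: nat
  assumes "j \<le> n"
  shows "fact (j+a) * (\<Prod>i\<in>{j<..n}. a+i) = (fact (n+a) :: nat)"
  using assms
proof (induction n)
  case 0 then show ?case by simp
next
  case (Suc n)
  show ?case
  proof (cases "j = Suc n")
    case True then show ?thesis by simp
  next
    case False
    then have jn: "j \<le> n" using Suc.prems by simp
    have "{j<..Suc n} = insert (Suc n) {j<..n}" using jn by auto
    then have "(\<Prod>i\<in>{j<..Suc n}. a+i) = (a + Suc n) * (\<Prod>i\<in>{j<..n}. a+i)" by simp
    then show ?thesis using Suc.IH[OF jn] by (simp add: algebra_simps)
  qed
qed

definition bb :: "nat \<Rightarrow> nat \<Rightarrow> nat \<Rightarrow> nat" where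
  "bb n a j = (\<Prod>i\<in>{j<..n}. a+i)"

lemma bb_split:
  assumes "j \<le> n"
  shows "bb n a 0 = (\<Prod>i=1..j. a+i) * bb n a j"
proof -
  have 1: "fact (0+a) * bb n a 0 = (fact (n+a) :: nat)" unfolding bb_def by (rule fact_prod) simp
  have 2: "fact (j+a) * bb n a j = (fact (n+a) :: nat)" unfolding bb_def by (rule fact_prod[OF assms])
  have 3: "fact (0+a) * (\<Prod>i\<in>{0<..j}. a+i) = (fact (j+a) :: nat)" by (rule fact_prod) simp
  have e: "{0<..j} = {1..j}" by auto
  have "fact a * ((\<Prod>i=1..j. a+i) * bb n a j) = (fact a * (\<Prod>i\<in>{0<..j}. a+i)) * bb n a j"
    using e by (simp add: mult.assoc)
  also have "\<dots> = fact (n+a)" using 2 3 by simp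
  finally have "fact a * bb n a 0 = fact a * ((\<Prod>i=1..j. a+i) * bb n a j)"
    using 1 by simp
  then show ?thesis by simp
qed

lemma bb_nz: "bb n a j \<noteq> 0" unfolding bb_def by simp

lemma main_ii:
  fixes a n k p :: nat and c :: "nat \<Rightarrow> int"
  assumes a: "a > 0" and k: "1 \<le> k" and nk: "2 * k \<le> n"
    and pk: "p \<ge> k + 2" and C: "cond_C n k a c p" and nA: "int a \<notin> A_p k p"
  shows "\<not> has_factor_of_degree (f_poly n a c) k"
proof
  assume "has_factor_of_degree (f_poly n a c) k"
  then obtain g where dg: "degree g = k" and gd: "g dvd f_poly n a c"
    unfolding has_factor_of_degree_def by blast
  then obtain h where fgh: "f_poly n a c = g * h" by (auto elim: dvdE)
  have p: "prime p" and pdv: "p dvd (\<Prod>i=1..k. a + n - k + i)" and pc: "\<not> int p dvd (c 0 * c n)"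
    using C unfolding cond_C_def by auto
  define P where "P = int p"
  have P: "prime P" unfolding P_def using p by (simp add: prime_nat_int_transfer)
  have pc0: "\<not> P dvd c 0" and pcn: "\<not> P dvd c n" using pc unfolding P_def by auto
  define F :: "int poly" where "F = (\<Sum>j\<le>n. Polynomial.monom (c j * int (bb n a j)) j)"
  have cF: "Polynomial.coeff F j = (if j \<le> n then c j * int (bb n a j) else 0)" for j
    unfolding F_def by (simp add: Polynomial.coeff_sum Polynomial.coeff_monom)
  have bbn: "bb n a n = 1" unfolding bb_def by simp
  have cFn: "Polynomial.coeff F n = c n" using cF[of n] bbn by simp
  have cn0: "c n \<noteq> 0" using pcn by auto
  have degF: "degree F = n"
  proof (rule antisym)
    show "degree F \<le> n" by (rule Polynomial.degree_le) (auto simp: cF)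
    show "n \<le> degree F" using cFn cn0 by (intro Polynomial.le_degree) simp
  qed
  have mapF: "map_poly of_int F = Polynomial.smult (fact (n+a)) (f_poly n a c)"
  proof (rule Polynomial.poly_eqI)
    fix j
    have "Polynomial.coeff (map_poly (of_int :: int \<Rightarrow> rat) F) j = of_int (Polynomial.coeff F j)" by (simp add: Polynomial.coeff_map_poly)
    moreover have "Polynomial.coeff (f_poly n a c) j = (if j \<le> n then of_int (c j) / fact (j + a) else 0)"
      unfolding f_poly_def by (simp add: Polynomial.coeff_sum Polynomial.coeff_monom)
    moreover have "j \<le> n \<Longrightarrow> (of_nat (bb n a j) :: rat) = fact (n+a) / fact (j+a)"
    proof -
      assume jn: "j \<le> n"
      have "(fact (j+a) :: rat) * of_nat (bb n a j) = fact (n+a)"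
        using arg_cong[OF fact_prod[OF jn, of a], of "of_nat :: nat \<Rightarrow> rat"] unfolding bb_def
        by (simp add: of_nat_prod)
      then show ?thesis by (simp add: field_simps)
    qed
    ultimately show "Polynomial.coeff (map_poly of_int F) j = Polynomial.coeff (Polynomial.smult (fact (n+a)) (f_poly n a c)) j"
      by (auto simp: cF)
  qed
  then have "map_poly of_int F = Polynomial.smult (fact (n+a)) g * h" using fgh by simp
  from rat_to_int_factor[OF this] obtain G H where FGH: "F = G * H" and dG: "degree G = k"
    using dg by auto
  have F0: "F \<noteq> 0" using degF cFn cn0 by auto
  have G0: "G \<noteq> 0" and H0: "H \<noteq> 0" using F0 FGH by auto
  have dH: "degree H = n - k" using Polynomial.degree_mult_eq[OF G0 H0] FGH degF dG by simp
  have lc: "Polynomial.coeff G k * Polynomial.coeff H (degree H) = c n"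
    using Polynomial.lead_coeff_mult[of G H] FGH degF dG cFn by simp
  have gk: "\<not> P dvd Polynomial.coeff G k" and hl: "\<not> P dvd Polynomial.coeff H (degree H)"
    using lc pcn by (metis dvd_mult dvd_mult2)+
  have cF0: "Polynomial.coeff F 0 = c 0 * int (bb n a 0)" using cF[of 0] by simp
  have F00: "Polynomial.coeff F 0 \<noteq> 0" using cF0 pc0 bb_nz by auto
  have gh0: "Polynomial.coeff G 0 * Polynomial.coeff H 0 = Polynomial.coeff F 0" using FGH by (simp add: Polynomial.coeff_mult_0)
  have g0: "Polynomial.coeff G 0 \<noteq> 0" and h0: "Polynomial.coeff H 0 \<noteq> 0" using gh0 F00 by auto
  have pb: "p dvd bb n a j" if "j \<le> n - k" for j
  proof -
    from pdv p obtain i where i: "i \<in> {1..k}" and pi: "p dvd a + n - k + i"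
      using prime_dvd_prod_iff[of "{1..k}" p] by auto
    have "n - k + i \<in> {j<..n}" using i that nk by auto
    moreover have "a + n - k + i = a + (n - k + i)" using nk i by simp
    ultimately show ?thesis unfolding bb_def using pi by (metis dvd_prod finite_greaterThanAtMost dvd_trans)
  qed
  show False
  proof (cases "P dvd Polynomial.coeff G 0")
    case True
    have pe: "prime_elem P" using P by (rule prime_imp_prime_elem)
    have slope: "int k * (int (multiplicity P (Polynomial.coeff (G*H) 0)) - int (multiplicity P (Polynomial.coeff (G*H) j))) < int j"
      if j1: "1 \<le> j" and nz: "Polynomial.coeff (G*H) j \<noteq> 0" for j
    proof -
      have jn: "j \<le> n" using nz FGH cF by (metis Polynomial.le_degree degF)
      have cj: "Polynomial.coeff F j = c j * int (bb n a j)" using cF jn by simp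
      have cj0: "c j \<noteq> 0" using nz FGH cj by auto
      have bz: "int (bb n a j) \<noteq> 0" "int (bb n a 0) \<noteq> 0" using bb_nz by auto
      have Pz: "(\<Prod>i=1..j. a+i) \<noteq> 0" by simp
      have c00: "c 0 \<noteq> 0" using pc0 by auto
      have v0: "multiplicity P (Polynomial.coeff F 0) = multiplicity p (bb n a 0)"
        unfolding cF0 P_def using prime_elem_multiplicity_mult_distrib[OF pe[unfolded P_def] _ bz(2), of "c 0"]
          pc0 not_dvd_imp_multiplicity_0[OF pc0] c00 mult_int[OF p bb_nz] P_def by auto
      have vj: "multiplicity P (Polynomial.coeff F j) \<ge> multiplicity p (bb n a j)"
        unfolding cj P_def using prime_elem_multiplicity_mult_distrib[OF pe[unfolded P_def] cj0 bz(1)]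
          mult_int[OF p bb_nz] by simp
      have vb: "multiplicity p (bb n a 0) = multiplicity p (\<Prod>i=1..j. a+i) + multiplicity p (bb n a j)"
        unfolding bb_split[OF jn] using prime_elem_multiplicity_mult_distrib[of p, OF _ Pz bb_nz] p by simp
      have nt: "k * multiplicity p (\<Prod>i=1..j. a+i) < j" by (rule NT_main[OF p k _ a nA j1]) (use pk in simp)
      have A: "int k * int (multiplicity p (bb n a j)) \<le> int k * int (multiplicity P (Polynomial.coeff F j))"
        using vj by (intro mult_left_mono) auto
      have B: "int k * int (multiplicity p (\<Prod>i=1..j. a+i)) < int j" using nt by (metis of_nat_mult of_nat_less_iff)
      have "int k * (int (multiplicity P (Polynomial.coeff F 0)) - int (multiplicity P (Polynomial.coeff F j))) < int j"
        using v0 vb A B by (simp add: algebra_simps)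
      then show ?thesis using FGH by simp
    qed
    show False by (rule step1[OF P dG k gk True g0 h0 slope])
  next
    case False
    from step2[OF P False hl] obtain j where j: "j \<le> degree H" and nd: "\<not> P dvd Polynomial.coeff (G*H) j" by auto
    have jn: "j \<le> n - k" using j dH by simp
    have "P dvd Polynomial.coeff F j" using cF pb[OF jn] jn unfolding P_def by auto
    then show False using nd FGH by simp
  qed
qed

lemma not_in_A_large:
  assumes "p > a + k" "a > 0" "k \<ge> 1"
  shows "int a \<notin> A_p k p"
proof
  assume h: "int a \<in> A_p k p"
  have rp: "r_p k p \<ge> 1" using assms unfolding r_p_def by auto
  have "p * r_p k p \<ge> p * 1" using rp by (intro mult_left_mono) auto
  then have "int p * int (r_p k p) \<ge> int p" by (metis of_nat_mult of_nat_le_iff mult_1_right)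
  moreover have "int a < int p" using assms by simp
  ultimately have "int a \<le> int (p * r_p k p)" unfolding of_nat_mult by linarith
  then have n2: "int a \<notin> {j. j > int (p * r_p k p)}" by auto
  have n1: "int a \<notin> {int (i * p) - int k .. int (i * p) - 1}" if "i \<ge> 1" for i :: nat
  proof -
    have "i * p \<ge> 1 * p" using that by (intro mult_right_mono) auto
    then have "int i * int p \<ge> int p" by (metis of_nat_mult of_nat_le_iff mult_1_left)
    moreover have "int a + int k < int p" using assms by simp
    ultimately show ?thesis by (simp only: atLeastAtMost_iff of_nat_mult) linarith
  qed
  from h n1 n2 show False unfolding A_p_def by auto
qed

theorem corollary2p2:
  fixes a n k :: nat and c :: "nat \<Rightarrow> int"
  assumes "a > 0" and "1 \<le> k" and "2 * k \<le> n"
  shows "((\<exists>p. p > a + k \<and> cond_C n k a c p) \<longrightarrow> \<not> has_factor_of_degree (f_poly n a c) k)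
    \<and> (\<forall>p. p \<ge> k + 2 \<and> cond_C n k a c p \<and> int a \<notin> A_p k p
            \<longrightarrow> \<not> has_factor_of_degree (f_poly n a c) k)
    \<and> (\<forall>Q. finite Q \<and> Q \<noteq> {} \<and> (\<forall>q\<in>Q. q \<ge> k + 2 \<and> cond_C n k a c q)
            \<and> int a \<notin> (\<Inter>q\<in>Q. A_p k q)
            \<longrightarrow> \<not> has_factor_of_degree (f_poly n a c) k)"
proof (intro conjI allI impI)
  assume "\<exists>p. p > a + k \<and> cond_C n k a c p"
  then obtain p where p: "p > a + k" "cond_C n k a c p" by auto
  show "\<not> has_factor_of_degree (f_poly n a c) k"
    by (rule main_ii[OF assms _ p(2) not_in_A_large[OF p(1) assms(1,2)]]) (use p assms in simp)
next
  fix p assume "k + 2 \<le> p \<and> cond_C n k a c p \<and> int a \<notin> A_p k p"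
  then show "\<not> has_factor_of_degree (f_poly n a c) k" using main_ii[OF assms] by blast
next
  fix Q assume h: "finite Q \<and> Q \<noteq> {} \<and> (\<forall>q\<in>Q. q \<ge> k + 2 \<and> cond_C n k a c q) \<and> int a \<notin> (\<Inter>q\<in>Q. A_p k q)"
  then obtain q where "q \<in> Q" "int a \<notin> A_p k q" by auto
  then show "\<not> has_factor_of_degree (f_poly n a c) k" using main_ii[OF assms] h by blast
qed

end
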